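(* For every prime $p$: (i) $\{(r,e,d)\in\mathscr{U}(p)\mid d=r\}=\mathscr{B}_+(p)$; (ii) $\{(r,e,d)\in\mathscr{U}(p)\mid d=r-1\}=\mathscr{B}_0(p)$; (iii) $\{(r,e,d)\in\mathscr{U}(p)\mid r=2\}=\{(r,e,d)\in\mathscr{B}(p)\mid r=2\}$.
   Context: Let $p$ be a prime. For integer triples $(r,e,d)$ put $g=\left\{red-\frac{d(d+1)}{2}(p-1)\right\}\big/\frac{r(r-1)}{2}\in\mathbb{Q}$. $\mathscr{U}(p)$ is the set of integer triples $(r,e,d)$ with $r\ge2$, $e\ge1$, $1\le d\le p$, $d(p-1)\le re\le r(p-1)$, $g>0$, and $g\in2\mathbb{Z}$ if $p\ne2$, $g\in\mathbb{Z}$ if $p=2$. $\mathscr{B}(p)=\mathscr{B}_+(p)\cup\mathscr{B}_0(p)\cup\mathscr{B}_-(p)$ where $\mathscr{B}_+(p)=\{(r,e,d): 2\le r\le p,\ e=p-1,\ d=r\}$, $\mathscr{B}_0(p)=\{(r,e,d): 2\le r\le p+1,\ (p-1)/2<e\le p-1,\ r(p-1-e)\le p-1,\ d=r-1\}$, $\mathscr{B}_-(p)=\{(r,e,d): r\ge2,\ (p-1)/2<e\le p-1,\ r(p-1-e)=p-1,\ d=r-2\}$ (integer triples). *)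

theory Defs
  imports Complex_Main "HOL-Computational_Algebra.Primes"
begin

definition gval :: "int \<Rightarrow> int \<Rightarrow> int \<Rightarrow> int \<Rightarrow> rat" where
  "gval p r e d =
     (of_int (r * e * d) - of_int (d * (d + 1)) / 2 * of_int (p - 1)) / (of_int (r * (r - 1)) / 2)"

definition U :: "int \<Rightarrow> (int \<times> int \<times> int) set" where
  "U p = {(r, e, d). r \<ge> 2 \<and> e \<ge> 1 \<and> 1 \<le> d \<and> d \<le> p \<and>
            d * (p - 1) \<le> r * e \<and> r * e \<le> r * (p - 1) \<and>
            gval p r e d > 0 \<and>
            (if p \<noteq> 2 then (\<exists>k::int. gval p r e d = of_int (2 * k))
             else gval p r e d \<in> \<int>)}"

definition Bplus :: "int \<Rightarrow> (int \<times> int \<times> int) set" where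
  "Bplus p = {(r, e, d). 2 \<le> r \<and> r \<le> p \<and> e = p - 1 \<and> d = r}"

definition Bzero :: "int \<Rightarrow> (int \<times> int \<times> int) set" where
  "Bzero p = {(r, e, d). 2 \<le> r \<and> r \<le> p + 1 \<and>
      (of_int (p - 1) / 2 :: rat) < of_int e \<and> e \<le> p - 1 \<and>
      r * (p - 1 - e) \<le> p - 1 \<and> d = r - 1}"

definition Bminus :: "int \<Rightarrow> (int \<times> int \<times> int) set" where
  "Bminus p = {(r, e, d). 2 \<le> r \<and>
      (of_int (p - 1) / 2 :: rat) < of_int e \<and> e \<le> p - 1 \<and>
      r * (p - 1 - e) = p - 1 \<and> d = r - 2}"

definition B :: "int \<Rightarrow> (int \<times> int \<times> int) set" where
  "B p = Bplus p \<union> Bzero p \<union> Bminus p"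

end

theory Submission
  imports Defs
begin

lemma g_plus: "(r::int) \<ge> 2 \<Longrightarrow> gval p r (p-1) r = of_int (p-1)"
proof -
  assume r: "r \<ge> 2"
  have nz: "(of_int r::rat) * (of_int r - 1) \<noteq> 0" using r by simp
  show ?thesis unfolding gval_def using nz
    by (simp add: field_simps)
qed

lemma g_zero: "(r::int) \<ge> 2 \<Longrightarrow> gval p r e (r-1) = of_int (2*e-(p-1))"
proof -
  assume r: "r \<ge> 2"
  have nz: "(of_int r::rat) * (of_int r - 1) \<noteq> 0" using r by simp
  show ?thesis unfolding gval_def using nz
    by (simp add: field_simps)
qed

lemma even_iff: "(\<exists>k::int. (of_int x::rat) = of_int (2*k)) \<longleftrightarrow> even x"
proof
  assume "\<exists>k::int. (of_int x::rat) = of_int (2*k)"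
  then obtain k where "(of_int x::rat) = of_int (2*k)" by blast
  hence "x = 2*k" by (simp only: of_int_eq_iff)
  thus "even x" by simp
next
  assume "even x" then obtain k where "x = 2*k" by blast
  thus "\<exists>k::int. (of_int x::rat) = of_int (2*k)" by blast
qed

lemma odd_p: "prime (p::int) \<Longrightarrow> p \<noteq> 2 \<Longrightarrow> odd p"
proof -
  assume a: "prime p" "p \<noteq> 2"
  have "p \<ge> 2" using prime_ge_2_int[OF a(1)] .
  hence "p > 2" using a(2) by linarith
  thus "odd p" using prime_odd_int[OF a(1)] by blast
qed

lemma U_mem: "(r,e,d) \<in> U p \<longleftrightarrow> (r \<ge> 2 \<and> e \<ge> 1 \<and> 1 \<le> d \<and> d \<le> p \<and>
            d * (p - 1) \<le> r * e \<and> r * e \<le> r * (p - 1) \<and>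
            gval p r e d > 0 \<and>
            (if p \<noteq> 2 then (\<exists>k::int. gval p r e d = of_int (2 * k))
             else gval p r e d \<in> \<int>))"
  unfolding U_def by (simp only: mem_Collect_eq case_prod_conv)

lemma Bplus_mem: "(r,e,d) \<in> Bplus p \<longleftrightarrow> (2 \<le> r \<and> r \<le> p \<and> e = p - 1 \<and> d = r)"
  unfolding Bplus_def by (simp only: mem_Collect_eq case_prod_conv)

lemma Bzero_mem: "(r,e,d) \<in> Bzero p \<longleftrightarrow> (2 \<le> r \<and> r \<le> p + 1 \<and>
      (of_int (p - 1) / 2 :: rat) < of_int e \<and> e \<le> p - 1 \<and>
      r * (p - 1 - e) \<le> p - 1 \<and> d = r - 1)"
  unfolding Bzero_def by (simp only: mem_Collect_eq case_prod_conv)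

lemma Bminus_mem: "(r,e,d) \<in> Bminus p \<longleftrightarrow> (2 \<le> r \<and>
      (of_int (p - 1) / 2 :: rat) < of_int e \<and> e \<le> p - 1 \<and>
      r * (p - 1 - e) = p - 1 \<and> d = r - 2)"
  unfolding Bminus_def by (simp only: mem_Collect_eq case_prod_conv)

lemma half_iff: "((of_int a)/2 :: rat) < of_int e \<longleftrightarrow> a < 2*e"
proof -
  have "((of_int a)/2 :: rat) < of_int e \<longleftrightarrow> of_int a < (of_int (2*e)::rat)" by (simp add: field_simps)
  also have "\<dots> \<longleftrightarrow> a < 2*e" by (rule of_int_less_iff)
  finally show ?thesis .
qed

lemma comp_mem: "((r::'a),(e::'b),(d::'c)) \<in> {(r, e, d) \<in> A. P r e d} \<longleftrightarrow> (r,e,d) \<in> A \<and> P r e d"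
  by auto

lemma d_le_r: "(r,e,d) \<in> U p \<Longrightarrow> p \<ge> 2 \<Longrightarrow> d \<le> r"
proof -
  assume h: "(r,e,d) \<in> U p" "p \<ge> 2"
  hence "d * (p-1) \<le> r * e" "r * e \<le> r * (p-1)" unfolding U_mem by blast+
  hence "d * (p-1) \<le> r * (p-1)" by linarith
  moreover have "p - 1 > 0" using h(2) by linarith
  ultimately show ?thesis by (meson mult_right_le_imp_le)
qed

lemma part1: assumes "prime p" shows "(r,e,r) \<in> U p \<longleftrightarrow> (r,e,r) \<in> Bplus p"
proof -
  have p2: "p \<ge> 2" using assms prime_ge_2_int by blast
  show ?thesis
  proof
    assume h: "(r,e,r) \<in> U p"
    hence r: "r \<ge> 2" "r \<le> p" and a: "r*(p-1) \<le> r*e" "r*e \<le> r*(p-1)" unfolding U_mem by blast+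
    from a have "r*e = r*(p-1)" by linarith
    hence "e = p-1" using r by simp
    thus "(r,e,r) \<in> Bplus p" using r unfolding Bplus_mem by blast
  next
    assume h: "(r,e,r) \<in> Bplus p"
    hence r: "r \<ge> 2" "r \<le> p" and e: "e = p-1" unfolding Bplus_mem by blast+
    have g: "gval p r e r = of_int (p-1)" using g_plus[OF r(1)] e by simp
    have gp: "gval p r e r > 0" using g p2 by simp
    have ev: "p \<noteq> 2 \<Longrightarrow> (\<exists>k::int. gval p r e r = of_int (2 * k))"
      using odd_p[OF assms] even_iff[of "p-1"] g by simp
    have ii: "gval p r e r \<in> \<int>" using g by simp
    have ifp: "if p \<noteq> 2 then (\<exists>k::int. gval p r e r = of_int (2 * k)) else gval p r e r \<in> \<int>"
      by (rule if_split[THEN iffD2]) (use ev ii in blast)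
    have e1: "e \<ge> 1" using e p2 by linarith
    have a1: "r * (p-1) \<le> r*e" "r*e \<le> r*(p-1)" using e by simp_all
    show "(r,e,r) \<in> U p" unfolding U_mem using r e1 a1 gp ifp by (intro conjI) (blast, blast, linarith, blast+)
  qed
qed

lemma part2: assumes "prime p" shows "(r,e,r-1) \<in> U p \<longleftrightarrow> (r,e,r-1) \<in> Bzero p"
proof -
  have p2: "p \<ge> 2" using assms prime_ge_2_int by blast
  show ?thesis
  proof
    assume h: "(r,e,r-1) \<in> U p"
    hence r1: "r \<ge> 2" and d: "r - 1 \<le> p" and a: "(r-1)*(p-1) \<le> r*e" "r*e \<le> r*(p-1)"
      and gp: "gval p r e (r-1) > 0" unfolding U_mem by blast+
    have r: "r \<ge> 2" "r \<le> p+1" using r1 d by linarith+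
    from gp g_zero[OF r(1)] have "2*e-(p-1) > 0" by simp
    hence e1: "(of_int (p - 1) / 2 :: rat) < of_int e" using half_iff by simp
    have e2: "e \<le> p-1" using a(2) r by simp
    have c: "r * (p - 1 - e) \<le> p - 1" using a(1) by (simp add: algebra_simps)
    show "(r,e,r-1) \<in> Bzero p" using r e1 e2 c unfolding Bzero_mem by blast
  next
    assume h: "(r,e,r-1) \<in> Bzero p"
    hence r: "r \<ge> 2" "r \<le> p+1" and e1: "(of_int (p - 1) / 2 :: rat) < of_int e"
      and e2: "e \<le> p-1" and c: "r * (p - 1 - e) \<le> p - 1" unfolding Bzero_mem by blast+
    from e1 have e3: "2*e-(p-1) > 0" using half_iff by simp
    have g: "gval p r e (r-1) = of_int (2*e-(p-1))" using g_zero[OF r(1)] by simp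
    have gp: "gval p r e (r-1) > 0" using g e3 by simp
    have ev: "p \<noteq> 2 \<Longrightarrow> (\<exists>k::int. gval p r e (r-1) = of_int (2 * k))"
      using odd_p[OF assms] even_iff[of "2*e-(p-1)"] g by simp
    have ii: "gval p r e (r-1) \<in> \<int>" using g by simp
    have ifp: "if p \<noteq> 2 then (\<exists>k::int. gval p r e (r-1) = of_int (2 * k)) else gval p r e (r-1) \<in> \<int>"
      by (rule if_split[THEN iffD2]) (use ev ii in blast)
    have a1: "(r-1)*(p-1) \<le> r*e" using c by (simp add: algebra_simps)
    have a2: "r*e \<le> r*(p-1)" using e2 r by simp
    have e4: "e \<ge> 1" using e3 p2 by linarith
    have d1: "1 \<le> r - 1" "r - 1 \<le> p" using r by linarith+
    show "(r,e,r-1) \<in> U p" unfolding U_mem using r(1) e4 d1 a1 a2 gp ifp by blast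
  qed
qed

theorem lemma5:
  fixes p :: int
  assumes "prime p"
  shows "{(r, e, d) \<in> U p. d = r} = Bplus p \<and>
    {(r, e, d) \<in> U p. d = r - 1} = Bzero p \<and>
    {(r, e, d) \<in> U p. r = 2} = {(r, e, d) \<in> B p. r = 2}"
proof (intro conjI)
  have p2: "p \<ge> 2" using assms prime_ge_2_int by blast
  show 1: "{(r, e, d) \<in> U p. d = r} = Bplus p"
  proof (rule set_eqI)
    fix x :: "int \<times> int \<times> int"
    obtain r e d where x: "x = (r,e,d)" by (cases x) auto
    have "(r,e,d) \<in> Bplus p \<Longrightarrow> d = r" unfolding Bplus_mem by blast
    thus "x \<in> {(r, e, d) \<in> U p. d = r} \<longleftrightarrow> x \<in> Bplus p"
      unfolding x comp_mem using part1[OF assms, of r e] by blast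
  qed
  show 2: "{(r, e, d) \<in> U p. d = r - 1} = Bzero p"
  proof (rule set_eqI)
    fix x :: "int \<times> int \<times> int"
    obtain r e d where x: "x = (r,e,d)" by (cases x) auto
    have "(r,e,d) \<in> Bzero p \<Longrightarrow> d = r - 1" unfolding Bzero_mem by blast
    thus "x \<in> {(r, e, d) \<in> U p. d = r - 1} \<longleftrightarrow> x \<in> Bzero p"
      unfolding x comp_mem using part2[OF assms, of r e] by blast
  qed
  show "{(r, e, d) \<in> U p. r = 2} = {(r, e, d) \<in> B p. r = 2}"
  proof (rule set_eqI)
    fix x :: "int \<times> int \<times> int"
    obtain r e d where x: "x = (r,e,d)" by (cases x) auto
    have A: "(r,e,d) \<in> U p \<Longrightarrow> r = 2 \<Longrightarrow> (r,e,d) \<in> B p"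
    proof -
      assume h: "(r,e,d) \<in> U p" "r = 2"
      have "d \<le> r" using d_le_r[OF h(1) p2] .
      moreover have "d \<ge> 1" using h(1) unfolding U_mem by blast
      ultimately have "d = r \<or> d = r - 1" using h(2) by auto
      thus "(r,e,d) \<in> B p" using h part1[OF assms] part2[OF assms] unfolding B_def by blast
    qed
    have C: "(r,e,d) \<in> B p \<Longrightarrow> r = 2 \<Longrightarrow> (r,e,d) \<in> U p"
    proof -
      assume h: "(r,e,d) \<in> B p" "r = 2"
      have nm: "(r,e,d) \<notin> Bminus p"
      proof
        assume "(r,e,d) \<in> Bminus p"
        hence a: "(of_int (p - 1) / 2 :: rat) < of_int e" "r * (p - 1 - e) = p - 1"
          unfolding Bminus_mem by blast+
        from a(1) have "2*e > p-1" using half_iff by simp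
        with a(2) h(2) show False by simp
      qed
      have "(r,e,d) \<in> Bplus p \<or> (r,e,d) \<in> Bzero p" using h(1) nm unfolding B_def by blast
      thus "(r,e,d) \<in> U p"
      proof
        assume b: "(r,e,d) \<in> Bplus p"
        hence "d = r" unfolding Bplus_mem by blast
        thus ?thesis using b part1[OF assms, of r e] by simp
      next
        assume b: "(r,e,d) \<in> Bzero p"
        hence "d = r - 1" unfolding Bzero_mem by blast
        thus ?thesis using b part2[OF assms, of r e] by simp
      qed
    qed
    show "x \<in> {(r, e, d) \<in> U p. r = 2} \<longleftrightarrow> x \<in> {(r, e, d) \<in> B p. r = 2}"
      unfolding x comp_mem using A C by blast
  qed
qed

end
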